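(* Let $R$ be a commutative ring with ${\rm char}(R)=3$, $G$ a group with involution $\varphi$, and assume $(RG)^-_\varphi$ is commutative. Let $g,h\in G\setminus G_\varphi$ be non-commuting elements satisfying one of the following conditions: (C3) $gh\in G_\varphi$, $hg=\varphi(g)h=g\varphi(h)$; (C4) $gh=h\varphi(g)=\varphi(g)\varphi(h)$ and $\varphi(h)g=\varphi(g)h$; (C5) $gh=\varphi(h)g=\varphi(g)\varphi(h)$ and $h\varphi(g)=g\varphi(h)$; (C6) $hg\in G_\varphi$, $gh=\varphi(h)g=h\varphi(g)$. Then $\langle g^{-1}\varphi(g)\rangle=\langle h^{-1}\varphi(h)\rangle=\langle (g,h)\rangle$ and $(g,h)^3=1$.
   Context: An involution on a group $G$ is a map $\varphi:G\to G$ with $\varphi(gh)=\varphi(h)\varphi(g)$ and $\varphi^2=\mathrm{id}$, extended $R$-linearly to $RG$. $G_\varphi=\{g\in G\mid\varphi(g)=g\}$; $(RG)^-_\varphi=\{\alpha\in RG\mid\varphi(\alpha)=-\alpha\}$. The group commutator is $(g,h)=ghg^{-1}h^{-1}$. *)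

theory Defs
  imports "HOL-Algebra.Algebra"
begin

definition is_involution :: "('a, 'b) monoid_scheme \<Rightarrow> ('a \<Rightarrow> 'a) \<Rightarrow> bool" where
  "is_involution G \<phi> \<longleftrightarrow>
     (\<forall>x\<in>carrier G. \<phi> x \<in> carrier G) \<and>
     (\<forall>x\<in>carrier G. \<forall>y\<in>carrier G. \<phi> (x \<otimes>\<^bsub>G\<^esub> y) = \<phi> y \<otimes>\<^bsub>G\<^esub> \<phi> x) \<and>
     (\<forall>x\<in>carrier G. \<phi> (\<phi> x) = x)"

definition group_ring :: "('a, 'b) monoid_scheme \<Rightarrow> ('a \<Rightarrow> 'r::comm_ring_1) set" where
  "group_ring G = {\<alpha>. finite {x. \<alpha> x \<noteq> 0} \<and> {x. \<alpha> x \<noteq> 0} \<subseteq> carrier G}"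

definition gr_mult :: "('a, 'b) monoid_scheme \<Rightarrow> ('a \<Rightarrow> 'r::comm_ring_1) \<Rightarrow> ('a \<Rightarrow> 'r) \<Rightarrow> ('a \<Rightarrow> 'r)" where
  "gr_mult G \<alpha> \<beta> = (\<lambda>x. if x \<in> carrier G
       then (\<Sum>y\<in>{y. \<alpha> y \<noteq> 0}. \<alpha> y * \<beta> (inv\<^bsub>G\<^esub> y \<otimes>\<^bsub>G\<^esub> x)) else 0)"

text \<open>R-linear extension of \<phi> to RG: \<phi>(\<Sum> a_g g) = \<Sum> a_g \<phi>(g), so the coefficient of x is a_{\<phi>(x)}.\<close>
definition gr_inv_ext :: "('a, 'b) monoid_scheme \<Rightarrow> ('a \<Rightarrow> 'a) \<Rightarrow> ('a \<Rightarrow> 'r::comm_ring_1) \<Rightarrow> ('a \<Rightarrow> 'r)" where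
  "gr_inv_ext G \<phi> \<alpha> = (\<lambda>x. if x \<in> carrier G then \<alpha> (\<phi> x) else 0)"

definition skew_elems :: "('a, 'b) monoid_scheme \<Rightarrow> ('a \<Rightarrow> 'a) \<Rightarrow> ('a \<Rightarrow> 'r::comm_ring_1) set" where
  "skew_elems G \<phi> = {\<alpha> \<in> group_ring G. gr_inv_ext G \<phi> \<alpha> = - \<alpha>}"

definition gcomm :: "('a, 'b) monoid_scheme \<Rightarrow> 'a \<Rightarrow> 'a \<Rightarrow> 'a" where
  "gcomm G g h = g \<otimes>\<^bsub>G\<^esub> h \<otimes>\<^bsub>G\<^esub> inv\<^bsub>G\<^esub> g \<otimes>\<^bsub>G\<^esub> inv\<^bsub>G\<^esub> h"

end

theory Submission imports Defs begin

definition ind :: "'a \<Rightarrow> 'a \<Rightarrow> int" where "ind z a = (if z = a then 1 else 0)"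
definition dd :: "'a \<Rightarrow> 'a \<Rightarrow> 'a \<Rightarrow> 'r::comm_ring_1" where
  "dd a b = (\<lambda>z. (if z = a then 1 else 0) - (if z = b then 1 else 0))"

lemma dd_supp: "a \<noteq> b \<Longrightarrow> {y. (dd a b y :: 'r::comm_ring_1) \<noteq> 0} = {a, b}"
  by (auto simp: dd_def)

lemma gr_mult_dd:
  assumes G: "group G" and ab: "a \<in> carrier G" "b \<in> carrier G" "c \<in> carrier G" "d \<in> carrier G"
    and ne: "a \<noteq> b" and z: "z \<in> carrier G"
  shows "gr_mult G (dd a b) (dd c d) z = (of_int (ind z (a \<otimes>\<^bsub>G\<^esub> c) - ind z (a \<otimes>\<^bsub>G\<^esub> d)
      - ind z (b \<otimes>\<^bsub>G\<^esub> c) + ind z (b \<otimes>\<^bsub>G\<^esub> d)) :: 'r::comm_ring_1)"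
proof -
  interpret group G by fact
  have e: "\<And>x y. x \<in> carrier G \<Longrightarrow> y \<in> carrier G \<Longrightarrow> (inv\<^bsub>G\<^esub> x \<otimes>\<^bsub>G\<^esub> z = y) = (z = x \<otimes>\<^bsub>G\<^esub> y)"
    using z by (metis inv_solve_left)
  have "gr_mult G (dd a b) (dd c d) z = (dd a b a * dd c d (inv\<^bsub>G\<^esub> a \<otimes>\<^bsub>G\<^esub> z)
         + dd a b b * dd c d (inv\<^bsub>G\<^esub> b \<otimes>\<^bsub>G\<^esub> z) :: 'r)"
    unfolding gr_mult_def using z ne by (simp add: dd_supp)
  also have "\<dots> = of_int (ind z (a \<otimes>\<^bsub>G\<^esub> c) - ind z (a \<otimes>\<^bsub>G\<^esub> d)
      - ind z (b \<otimes>\<^bsub>G\<^esub> c) + ind z (b \<otimes>\<^bsub>G\<^esub> d))"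
    using ne ab by (simp add: dd_def e ind_def)
  finally show ?thesis .
qed

lemma dd_skew:
  assumes G: "group G" and inv: "is_involution G \<phi>" and g: "g \<in> carrier G" and ne: "\<phi> g \<noteq> g"
  shows "(dd g (\<phi> g) :: 'a \<Rightarrow> 'r::comm_ring_1) \<in> skew_elems G \<phi>"
proof -
  have pg: "\<phi> g \<in> carrier G" "\<phi> (\<phi> g) = g" using inv g unfolding is_involution_def by auto
  have "finite {x. (dd g (\<phi> g) x :: 'r) \<noteq> 0}" using ne by (simp add: dd_supp)
  moreover have "{x. (dd g (\<phi> g) x :: 'r) \<noteq> 0} \<subseteq> carrier G" using ne g pg by (simp add: dd_supp)
  moreover have "gr_inv_ext G \<phi> (dd g (\<phi> g)) = - (dd g (\<phi> g) :: 'a \<Rightarrow> 'r)"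
  proof
    fix x show "gr_inv_ext G \<phi> (dd g (\<phi> g)) x = (- (dd g (\<phi> g) :: 'a \<Rightarrow> 'r)) x"
    proof (cases "x \<in> carrier G")
      case True
      then have "\<phi> (\<phi> x) = x" using inv unfolding is_involution_def by auto
      then have "(\<phi> x = g) = (x = \<phi> g)" "(\<phi> x = \<phi> g) = (x = g)" using pg by metis+
      then show ?thesis using True by (simp add: gr_inv_ext_def dd_def)
    next
      case False
      then show ?thesis using g pg by (auto simp: gr_inv_ext_def dd_def)
    qed
  qed
  ultimately show ?thesis by (simp add: skew_elems_def group_ring_def)
qed

lemma (in group) generate_inv_eq:
  assumes "k \<in> carrier G" shows "generate G {inv k} = generate G {k}"
proof
  show "generate G {inv k} \<subseteq> generate G {k}"
    by (rule generate_subgroup_incl) (use assms generate_m_inv_closed[of "{k}" k] generate.incl[of k "{k}" G] generate_is_subgroup[of "{k}"] in auto)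
  show "generate G {k} \<subseteq> generate G {inv k}"
    by (rule generate_subgroup_incl) (use assms generate_m_inv_closed[of "{inv k}" "inv k"] generate.incl[of "inv k" "{inv k}" G] generate_is_subgroup[of "{inv k}"] in auto)
qed

lemma (in group) lc: "x \<in> carrier G \<Longrightarrow> y \<in> carrier G \<Longrightarrow> z \<in> carrier G \<Longrightarrow> (x \<otimes> y = x \<otimes> z) = (y = z)"
  by simp

lemma (in group) comm_inv:
  assumes c: "u \<in> carrier G" "y \<in> carrier G" and e: "u \<otimes> y = y \<otimes> u"
  shows "u \<otimes> inv y = inv y \<otimes> u"
proof -
  have "inv y \<otimes> u = inv y \<otimes> (u \<otimes> y) \<otimes> inv y" using c by (simp add: m_assoc)
  also have "\<dots> = u \<otimes> inv y" using c e by (simp add: m_assoc[symmetric])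
  finally show ?thesis by simp
qed

lemma (in group) case1:
  assumes c: "x \<in> carrier G" "y \<in> carrier G" "a \<in> carrier G" "b \<in> carrier G"
  and E3: "b \<otimes> a = x \<otimes> y" and E1: "y \<otimes> x = a \<otimes> y" and E2: "a \<otimes> y = x \<otimes> b"
  and E4: "a \<otimes> b = y \<otimes> a" and E5: "y \<otimes> a = b \<otimes> x"
  shows "\<exists>k\<in>carrier G. k \<otimes> k \<otimes> k = \<one> \<and> (inv x \<otimes> a = k \<or> inv x \<otimes> a = inv k)
     \<and> (inv y \<otimes> b = k \<or> inv y \<otimes> b = inv k) \<and> (gcomm G x y = k \<or> gcomm G x y = inv k)"
proof -
  define u where "u = inv x \<otimes> a"
  define v where "v = inv y \<otimes> b"
  have uc: "u \<in> carrier G" "v \<in> carrier G" using c by (auto simp: u_def v_def)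
  have a: "a = x \<otimes> u" using c by (simp add: u_def m_assoc[symmetric])
  have b: "b = y \<otimes> v" using c by (simp add: v_def m_assoc[symmetric])
  note cc = c uc
  have e1: "y \<otimes> x = x \<otimes> (u \<otimes> y)" using E1 cc by (simp add: a m_assoc)
  have e2: "u \<otimes> y = y \<otimes> v" using E2 cc by (simp add: a b m_assoc)
  have e3: "y \<otimes> (v \<otimes> (x \<otimes> u)) = x \<otimes> y" using E3 cc by (simp add: a b m_assoc)
  have e4: "x \<otimes> (u \<otimes> (y \<otimes> v)) = y \<otimes> (x \<otimes> u)" using E4 cc by (simp add: a b m_assoc)
  have e5: "x \<otimes> u = v \<otimes> x" using E5 cc by (simp add: a b m_assoc)
  have "y \<otimes> (x \<otimes> u) = x \<otimes> (u \<otimes> (y \<otimes> u))" using e1 cc by (metis m_assoc m_closed)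
  with e4 have vu: "v = u" using cc by simp
  have xu: "u \<otimes> x = x \<otimes> u" using e5 vu by simp
  have yu: "u \<otimes> y = y \<otimes> u" using e2 vu by simp
  have s4: "y \<otimes> x = x \<otimes> (y \<otimes> u)" using e1 yu by simp
  have "x \<otimes> y \<otimes> (u \<otimes> u \<otimes> u) = x \<otimes> y \<otimes> \<one>"
  proof -
    have "x \<otimes> y = y \<otimes> (u \<otimes> (x \<otimes> u))" using e3 vu by simp
    also have "\<dots> = y \<otimes> x \<otimes> (u \<otimes> u)" using cc xu by (metis m_assoc m_closed)
    also have "\<dots> = x \<otimes> y \<otimes> (u \<otimes> u \<otimes> u)" using cc s4 by (metis m_assoc m_closed)
    finally show ?thesis using cc by simp
  qed
  then have u3: "u \<otimes> u \<otimes> u = \<one>" using cc by (metis lc m_closed one_closed)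
  have uxy: "u \<otimes> (x \<otimes> y) = (x \<otimes> y) \<otimes> u" using cc xu yu by (metis m_assoc)
  have "gcomm G x y \<otimes> u = \<one>"
  proof -
    have "gcomm G x y \<otimes> u = x \<otimes> y \<otimes> (inv (y \<otimes> x) \<otimes> u)" using cc by (simp add: gcomm_def m_assoc inv_mult_group)
    also have "inv (y \<otimes> x) = inv u \<otimes> inv (x \<otimes> y)" using cc s4 by (simp add: inv_mult_group m_assoc)
    also have "inv u \<otimes> inv (x \<otimes> y) \<otimes> u = inv u \<otimes> (u \<otimes> inv (x \<otimes> y))"
      using comm_inv[OF uc(1) _ uxy] cc by (simp add: m_assoc)
    also have "x \<otimes> y \<otimes> (inv u \<otimes> (u \<otimes> inv (x \<otimes> y))) = \<one>" using cc by (simp add: m_assoc[symmetric])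
    finally show ?thesis .
  qed
  then have gc: "gcomm G x y = inv u" using cc by (metis inv_equality gcomm_def m_closed inv_closed)
  show ?thesis using uc u3 gc vu by (auto simp: u_def[symmetric] v_def[symmetric])
qed

lemma (in group) gc2:
  assumes c: "x \<in> carrier G" "y \<in> carrier G" "k \<in> carrier G"
  and kx: "k \<otimes> x = x \<otimes> k" and ky: "k \<otimes> y = y \<otimes> k" and e: "x \<otimes> y = y \<otimes> (x \<otimes> k)"
  shows "gcomm G x y = k"
proof -
  have kyx: "k \<otimes> (y \<otimes> x) = (y \<otimes> x) \<otimes> k" using c kx ky by (metis m_assoc)
  have "gcomm G x y = x \<otimes> y \<otimes> inv (y \<otimes> x)" using c by (simp add: gcomm_def m_assoc inv_mult_group)
  also have "\<dots> = y \<otimes> x \<otimes> (k \<otimes> inv (y \<otimes> x))" using c e by (simp add: m_assoc)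
  also have "k \<otimes> inv (y \<otimes> x) = inv (y \<otimes> x) \<otimes> k" using comm_inv[OF c(3) _ kyx] c by simp
  also have "y \<otimes> x \<otimes> (inv (y \<otimes> x) \<otimes> k) = k" using c by (simp add: m_assoc[symmetric])
  finally show ?thesis .
qed

lemma (in group) case2:
  assumes c: "x \<in> carrier G" "y \<in> carrier G" "a \<in> carrier G" "b \<in> carrier G"
  and F1: "x \<otimes> y = y \<otimes> a" and F2: "y \<otimes> a = a \<otimes> b" and F3: "b \<otimes> x = a \<otimes> y"
  and F4: "y \<otimes> x = b \<otimes> a" and F5: "b \<otimes> a = x \<otimes> b"
  shows "\<exists>k\<in>carrier G. k \<otimes> k \<otimes> k = \<one> \<and> (inv x \<otimes> a = k \<or> inv x \<otimes> a = inv k)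
     \<and> (inv y \<otimes> b = k \<or> inv y \<otimes> b = inv k) \<and> (gcomm G x y = k \<or> gcomm G x y = inv k)"
proof -
  define u where "u = inv x \<otimes> a"
  define v where "v = inv y \<otimes> b"
  have uc: "u \<in> carrier G" "v \<in> carrier G" using c by (auto simp: u_def v_def)
  have a: "a = x \<otimes> u" using c by (simp add: u_def m_assoc[symmetric])
  have b: "b = y \<otimes> v" using c by (simp add: v_def m_assoc[symmetric])
  note cc = c uc
  have e1: "x \<otimes> y = y \<otimes> (x \<otimes> u)" using F1 cc by (simp add: a m_assoc)
  have e2: "y = u \<otimes> (y \<otimes> v)" using F1 F2 cc by (simp add: a b m_assoc)
  have e3: "y \<otimes> (v \<otimes> x) = x \<otimes> (u \<otimes> y)" using F3 cc by (simp add: a b m_assoc)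
  have e4: "x = v \<otimes> (x \<otimes> u)" using F4 cc by (simp add: a b m_assoc)
  have e5: "y \<otimes> x = x \<otimes> (y \<otimes> v)" using F4 F5 cc by (simp add: a b m_assoc)
  have "x \<otimes> y \<otimes> \<one> = x \<otimes> y \<otimes> (v \<otimes> u)" using e1 e5 cc by (metis m_assoc r_one m_closed)
  then have vu: "v \<otimes> u = \<one>" using cc by (metis lc m_closed one_closed)
  then have uv: "u \<otimes> v = \<one>" using cc inv_comm by blast
  have yu: "y \<otimes> u = u \<otimes> y"
  proof -
    have "y \<otimes> u = u \<otimes> (y \<otimes> (v \<otimes> u))" using e2 cc by (metis m_assoc m_closed)
    then show ?thesis using vu cc by simp
  qed
  have xu: "u \<otimes> x = x \<otimes> u"
  proof -
    have "u \<otimes> x = (u \<otimes> v) \<otimes> (x \<otimes> u)" using e4 cc by (metis m_assoc m_closed)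
    then show ?thesis using uv cc by simp
  qed
  have xv: "v \<otimes> x = x \<otimes> v"
  proof -
    have "v \<otimes> x = v \<otimes> (x \<otimes> (u \<otimes> v))" using uv cc by simp
    also have "\<dots> = (v \<otimes> u) \<otimes> x \<otimes> v" using xu cc by (metis m_assoc m_closed)
    finally show ?thesis using vu cc by simp
  qed
  have "y \<otimes> x \<otimes> v = y \<otimes> x \<otimes> (u \<otimes> u)"
  proof -
    have "y \<otimes> x \<otimes> v = y \<otimes> (v \<otimes> x)" using xv cc by (simp add: m_assoc)
    also have "\<dots> = x \<otimes> y \<otimes> u" using e3 yu cc by (simp add: m_assoc)
    also have "\<dots> = y \<otimes> x \<otimes> (u \<otimes> u)" using e1 xu cc by (metis m_assoc m_closed)
    finally show ?thesis .
  qed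
  then have "v = u \<otimes> u" using cc by (metis lc m_closed)
  then have u3: "u \<otimes> u \<otimes> u = \<one>" using uv cc by (simp add: m_assoc)
  have vi: "v = inv u" using uv cc by (metis inv_equality inv_comm)
  have gc: "gcomm G x y = u" by (rule gc2[OF c(1,2) uc(1) xu yu[symmetric] e1])
  show ?thesis using uc u3 gc vi by (auto simp: u_def[symmetric] v_def[symmetric])
qed

lemma (in group) case3:
  assumes c: "x \<in> carrier G" "y \<in> carrier G" "a \<in> carrier G" "b \<in> carrier G"
  and G1: "x \<otimes> y = b \<otimes> x" and G2: "b \<otimes> x = a \<otimes> b" and G3: "y \<otimes> a = x \<otimes> b"
  and G4: "y \<otimes> x = b \<otimes> a" and G5: "b \<otimes> a = a \<otimes> y"
  shows "\<exists>k\<in>carrier G. k \<otimes> k \<otimes> k = \<one> \<and> (inv x \<otimes> a = k \<or> inv x \<otimes> a = inv k)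
     \<and> (inv y \<otimes> b = k \<or> inv y \<otimes> b = inv k) \<and> (gcomm G x y = k \<or> gcomm G x y = inv k)"
proof -
  define u where "u = inv x \<otimes> a"
  define v where "v = inv y \<otimes> b"
  have uc: "u \<in> carrier G" "v \<in> carrier G" using c by (auto simp: u_def v_def)
  have a: "a = x \<otimes> u" using c by (simp add: u_def m_assoc[symmetric])
  have b: "b = y \<otimes> v" using c by (simp add: v_def m_assoc[symmetric])
  note cc = c uc
  have e1: "x \<otimes> y = y \<otimes> (v \<otimes> x)" using G1 cc by (simp add: b m_assoc)
  have e2: "y = u \<otimes> (y \<otimes> v)" using G1 G2 cc by (simp add: a b m_assoc)
  have e3: "y \<otimes> (x \<otimes> u) = x \<otimes> (y \<otimes> v)" using G3 cc by (simp add: a b m_assoc)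
  have e4: "x = v \<otimes> (x \<otimes> u)" using G4 cc by (simp add: a b m_assoc)
  have e5: "y \<otimes> x = x \<otimes> (u \<otimes> y)" using G4 G5 cc by (simp add: a b m_assoc)
  have h1: "u \<otimes> (y \<otimes> u) = y \<otimes> v"
  proof -
    have "x \<otimes> (u \<otimes> (y \<otimes> u)) = x \<otimes> (y \<otimes> v)" using e3 e5 cc by (metis m_assoc m_closed)
    then show ?thesis using cc by simp
  qed
  have h2: "x \<otimes> u = v \<otimes> (x \<otimes> v)"
  proof -
    have "y \<otimes> (x \<otimes> u) = y \<otimes> (v \<otimes> (x \<otimes> v))" using e3 e1 cc by (metis m_assoc m_closed)
    then show ?thesis using cc by simp
  qed
  have "v \<otimes> x \<otimes> (u \<otimes> u) = v \<otimes> x \<otimes> v"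
  proof -
    have "v \<otimes> x \<otimes> (u \<otimes> u) = x \<otimes> u" using e4 cc by (metis m_assoc m_closed)
    also have "\<dots> = v \<otimes> x \<otimes> v" using h2 cc by (simp add: m_assoc)
    finally show ?thesis .
  qed
  then have vuu: "v = u \<otimes> u" using cc by (metis lc m_closed)
  have "u \<otimes> (y \<otimes> u) = u \<otimes> (y \<otimes> u) \<otimes> \<one>" using cc by simp
  have A: "y = u \<otimes> u \<otimes> y \<otimes> u" using e2 h1 cc by (metis m_assoc m_closed)
  have B: "y = u \<otimes> y \<otimes> (u \<otimes> u)" using e2 vuu cc by (metis m_assoc m_closed)
  have "u \<otimes> (u \<otimes> y \<otimes> u) = u \<otimes> (y \<otimes> u \<otimes> u)" using A B cc by (metis m_assoc m_closed)
  then have "u \<otimes> y \<otimes> u = y \<otimes> u \<otimes> u" using cc by (metis lc m_closed)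
  then have yu: "u \<otimes> y = y \<otimes> u" using cc by (metis right_cancel m_closed)
  have "y \<otimes> \<one> = y \<otimes> (u \<otimes> u \<otimes> u)" using B yu cc by (metis m_assoc m_closed r_one)
  then have u3: "u \<otimes> u \<otimes> u = \<one>" using cc by (metis lc m_closed one_closed)
  then have uv: "u \<otimes> v = \<one>" using vuu cc by (simp add: m_assoc)
  then have vu: "v \<otimes> u = \<one>" using cc inv_comm by blast
  have xu: "u \<otimes> x = x \<otimes> u"
  proof -
    have "u \<otimes> x = (u \<otimes> v) \<otimes> (x \<otimes> u)" using e4 cc by (metis m_assoc m_closed)
    then show ?thesis using uv cc by simp
  qed
  have xv: "v \<otimes> x = x \<otimes> v" using xu vuu cc by (metis m_assoc)
  have yv: "v \<otimes> y = y \<otimes> v" using yu vuu cc by (metis m_assoc)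
  have v3: "v \<otimes> v \<otimes> v = \<one>" using u3 vuu cc by (metis m_assoc m_closed one_closed r_one l_one)
  have ui: "u = inv v" using uv cc by (metis inv_equality)
  have e1': "x \<otimes> y = y \<otimes> (x \<otimes> v)" using e1 xv by simp
  have gc: "gcomm G x y = v" by (rule gc2[OF c(1,2) uc(2) xv yv e1'])
  show ?thesis using uc v3 gc ui by (auto simp: u_def[symmetric] v_def[symmetric])
qed

lemma (in group) case4:
  assumes c: "x \<in> carrier G" "y \<in> carrier G" "a \<in> carrier G" "b \<in> carrier G"
  and K1: "a \<otimes> b = y \<otimes> x" and K2: "x \<otimes> y = b \<otimes> x" and K3: "b \<otimes> x = y \<otimes> a"
  and K4: "b \<otimes> a = x \<otimes> b" and K5: "x \<otimes> b = a \<otimes> y"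
  shows "\<exists>k\<in>carrier G. k \<otimes> k \<otimes> k = \<one> \<and> (inv x \<otimes> a = k \<or> inv x \<otimes> a = inv k)
     \<and> (inv y \<otimes> b = k \<or> inv y \<otimes> b = inv k) \<and> (gcomm G x y = k \<or> gcomm G x y = inv k)"
proof -
  define u where "u = inv x \<otimes> a"
  define v where "v = inv y \<otimes> b"
  have uc: "u \<in> carrier G" "v \<in> carrier G" using c by (auto simp: u_def v_def)
  have a: "a = x \<otimes> u" using c by (simp add: u_def m_assoc[symmetric])
  have b: "b = y \<otimes> v" using c by (simp add: v_def m_assoc[symmetric])
  note cc = c uc
  have e1: "x \<otimes> (u \<otimes> (y \<otimes> v)) = y \<otimes> x" using K1 cc by (simp add: a b m_assoc)
  have e3: "x \<otimes> y = y \<otimes> (x \<otimes> u)" using K2 K3 cc by (simp add: a m_assoc)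
  have e23: "v \<otimes> x = x \<otimes> u" using K3 cc by (simp add: a b m_assoc)
  have e4: "y \<otimes> (v \<otimes> (x \<otimes> u)) = x \<otimes> (y \<otimes> v)" using K4 cc by (simp add: a b m_assoc)
  have e5: "y \<otimes> v = u \<otimes> y" using K5 cc by (simp add: a b m_assoc)
  have "y \<otimes> x \<otimes> (u \<otimes> u) = y \<otimes> x \<otimes> (u \<otimes> v)"
  proof -
    have "y \<otimes> x \<otimes> (u \<otimes> u) = y \<otimes> (v \<otimes> (x \<otimes> u))" using e23 cc by (metis m_assoc m_closed)
    also have "\<dots> = x \<otimes> y \<otimes> v" using e4 cc by (simp add: m_assoc)
    also have "\<dots> = y \<otimes> x \<otimes> (u \<otimes> v)" using e3 cc by (metis m_assoc m_closed)
    finally show ?thesis .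
  qed
  then have vu: "v = u" using cc by (metis lc m_closed)
  have xu: "u \<otimes> x = x \<otimes> u" using e23 vu by simp
  have yu: "u \<otimes> y = y \<otimes> u" using e5 vu by simp
  have "y \<otimes> x \<otimes> \<one> = y \<otimes> x \<otimes> (u \<otimes> u \<otimes> u)"
  proof -
    have "y \<otimes> x = x \<otimes> (u \<otimes> (y \<otimes> u))" using e1 vu by simp
    also have "\<dots> = x \<otimes> y \<otimes> (u \<otimes> u)" using yu cc by (metis m_assoc m_closed)
    also have "\<dots> = y \<otimes> x \<otimes> (u \<otimes> u \<otimes> u)" using e3 xu cc by (metis m_assoc m_closed)
    finally show ?thesis using cc by simp
  qed
  then have u3: "u \<otimes> u \<otimes> u = \<one>" using cc by (metis lc m_closed one_closed)
  have gc: "gcomm G x y = u" by (rule gc2[OF c(1,2) uc(1) xu yu e3])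
  show ?thesis using uc u3 gc vu by (auto simp: u_def[symmetric] v_def[symmetric])
qed


lemma (in group) main_aux:
  fixes \<phi> :: "'a \<Rightarrow> 'a" and g h :: 'a
  assumes "group G"
    and "CHAR('r::comm_ring_1) = 3"
    and "is_involution G \<phi>"
    and "\<forall>\<alpha>\<in>(skew_elems G \<phi> :: ('a \<Rightarrow> 'r) set). \<forall>\<beta>\<in>skew_elems G \<phi>.
           gr_mult G \<alpha> \<beta> = gr_mult G \<beta> \<alpha>"
    and "g \<in> carrier G" "h \<in> carrier G" "\<phi> g \<noteq> g" "\<phi> h \<noteq> h"
    and "g \<otimes>\<^bsub>G\<^esub> h \<noteq> h \<otimes>\<^bsub>G\<^esub> g"
    and "(\<phi> (g \<otimes>\<^bsub>G\<^esub> h) = g \<otimes>\<^bsub>G\<^esub> h \<and>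
            h \<otimes>\<^bsub>G\<^esub> g = \<phi> g \<otimes>\<^bsub>G\<^esub> h \<and> \<phi> g \<otimes>\<^bsub>G\<^esub> h = g \<otimes>\<^bsub>G\<^esub> \<phi> h)
       \<or> (g \<otimes>\<^bsub>G\<^esub> h = h \<otimes>\<^bsub>G\<^esub> \<phi> g \<and> h \<otimes>\<^bsub>G\<^esub> \<phi> g = \<phi> g \<otimes>\<^bsub>G\<^esub> \<phi> h \<and>
            \<phi> h \<otimes>\<^bsub>G\<^esub> g = \<phi> g \<otimes>\<^bsub>G\<^esub> h)
       \<or> (g \<otimes>\<^bsub>G\<^esub> h = \<phi> h \<otimes>\<^bsub>G\<^esub> g \<and> \<phi> h \<otimes>\<^bsub>G\<^esub> g = \<phi> g \<otimes>\<^bsub>G\<^esub> \<phi> h \<and>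
            h \<otimes>\<^bsub>G\<^esub> \<phi> g = g \<otimes>\<^bsub>G\<^esub> \<phi> h)
       \<or> (\<phi> (h \<otimes>\<^bsub>G\<^esub> g) = h \<otimes>\<^bsub>G\<^esub> g \<and>
            g \<otimes>\<^bsub>G\<^esub> h = \<phi> h \<otimes>\<^bsub>G\<^esub> g \<and> \<phi> h \<otimes>\<^bsub>G\<^esub> g = h \<otimes>\<^bsub>G\<^esub> \<phi> g)"
  shows "generate G {inv\<^bsub>G\<^esub> g \<otimes>\<^bsub>G\<^esub> \<phi> g} = generate G {inv\<^bsub>G\<^esub> h \<otimes>\<^bsub>G\<^esub> \<phi> h} \<and>
         generate G {inv\<^bsub>G\<^esub> h \<otimes>\<^bsub>G\<^esub> \<phi> h} = generate G {gcomm G g h} \<and>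
         gcomm G g h [^]\<^bsub>G\<^esub> (3::nat) = \<one>\<^bsub>G\<^esub>"
proof -
  note inv = assms(3)
  have gc: "g \<in> carrier G" "h \<in> carrier G" by fact+
  define a where "a = \<phi> g"
  define b where "b = \<phi> h"
  have ac: "a \<in> carrier G" "b \<in> carrier G" using inv gc unfolding is_involution_def a_def b_def by auto
  have pgh: "\<phi> (g \<otimes> h) = b \<otimes> a" "\<phi> (h \<otimes> g) = a \<otimes> b"
    using inv gc unfolding is_involution_def a_def b_def by auto
  have sa: "(dd g a :: 'a \<Rightarrow> 'r) \<in> skew_elems G \<phi>" unfolding a_def by (rule dd_skew[OF assms(1) inv gc(1) assms(7)])
  have sb: "(dd h b :: 'a \<Rightarrow> 'r) \<in> skew_elems G \<phi>" unfolding b_def by (rule dd_skew[OF assms(1) inv gc(2) assms(8)])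
  have comm: "gr_mult G (dd g a :: 'a \<Rightarrow> 'r) (dd h b) = gr_mult G (dd h b) (dd g a)"
    using assms(4) sa sb by blast
  have ne: "g \<noteq> a" "h \<noteq> b" using assms(7,8) a_def b_def by auto
  have key: "(3::int) dvd (ind z (g \<otimes> h) - ind z (g \<otimes> b) - ind z (a \<otimes> h) + ind z (a \<otimes> b)
      - (ind z (h \<otimes> g) - ind z (h \<otimes> a) - ind z (b \<otimes> g) + ind z (b \<otimes> a)))" if z: "z \<in> carrier G" for z
  proof -
    have "(of_int (ind z (g \<otimes> h) - ind z (g \<otimes> b) - ind z (a \<otimes> h) + ind z (a \<otimes> b)) :: 'r)
        = of_int (ind z (h \<otimes> g) - ind z (h \<otimes> a) - ind z (b \<otimes> g) + ind z (b \<otimes> a))"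
      using fun_cong[OF comm, of z] gr_mult_dd[OF assms(1) gc(1) ac(1) gc(2) ac(2) ne(1) z, where 'r='r]
        gr_mult_dd[OF assms(1) gc(2) ac(2) gc(1) ac(1) ne(2) z, where 'r='r] by simp
    then have "(of_int (ind z (g \<otimes> h) - ind z (g \<otimes> b) - ind z (a \<otimes> h) + ind z (a \<otimes> b)
      - (ind z (h \<otimes> g) - ind z (h \<otimes> a) - ind z (b \<otimes> g) + ind z (b \<otimes> a))) :: 'r) = 0" by simp
    then show ?thesis using assms(2) by (simp only: of_int_eq_0_iff_char_dvd) simp
  qed
  have ex: "\<exists>k\<in>carrier G. k \<otimes> k \<otimes> k = \<one> \<and> (inv g \<otimes> a = k \<or> inv g \<otimes> a = inv k)
     \<and> (inv h \<otimes> b = k \<or> inv h \<otimes> b = inv k) \<and> (gcomm G g h = k \<or> gcomm G g h = inv k)"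
    using assms(10) unfolding a_def[symmetric] b_def[symmetric] pgh
  proof (elim disjE conjE)
    assume E: "b \<otimes> a = g \<otimes> h" "h \<otimes> g = a \<otimes> h" "a \<otimes> h = g \<otimes> b"
    have "a \<otimes> b = h \<otimes> a \<and> h \<otimes> a = b \<otimes> g"
      using key[of "a \<otimes> b"] E ac gc by (auto simp: ind_def split: if_splits)
    then show ?thesis using case1[OF gc ac] E by auto
  next
    assume E: "g \<otimes> h = h \<otimes> a" "h \<otimes> a = a \<otimes> b" "b \<otimes> g = a \<otimes> h"
    have "h \<otimes> g = b \<otimes> a \<and> b \<otimes> a = g \<otimes> b"
      using key[of "h \<otimes> g"] E ac gc assms(9) by (auto simp: ind_def split: if_splits)
    then show ?thesis using case2[OF gc ac] E by auto
  next
    assume E: "g \<otimes> h = b \<otimes> g" "b \<otimes> g = a \<otimes> b" "h \<otimes> a = g \<otimes> b"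
    have "h \<otimes> g = b \<otimes> a \<and> b \<otimes> a = a \<otimes> h"
      using key[of "h \<otimes> g"] E ac gc assms(9) by (auto simp: ind_def split: if_splits)
    then show ?thesis using case3[OF gc ac] E by auto
  next
    assume E: "a \<otimes> b = h \<otimes> g" "g \<otimes> h = b \<otimes> g" "b \<otimes> g = h \<otimes> a"
    have "b \<otimes> a = g \<otimes> b \<and> g \<otimes> b = a \<otimes> h"
      using key[of "b \<otimes> a"] E ac gc by (auto simp: ind_def split: if_splits)
    then show ?thesis using case4[OF gc ac] E by auto
  qed
  then obtain k where k: "k \<in> carrier G" "k \<otimes> k \<otimes> k = \<one>"
    and U: "inv g \<otimes> a = k \<or> inv g \<otimes> a = inv k" and V: "inv h \<otimes> b = k \<or> inv h \<otimes> b = inv k"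
    and C: "gcomm G g h = k \<or> gcomm G g h = inv k" by blast
  have k3: "k [^] (3::nat) = \<one>" using k by (simp add: numeral_3_eq_3 m_assoc)
  have gU: "generate G {inv g \<otimes> a} = generate G {k}" using U k generate_inv_eq by auto
  have gV: "generate G {inv h \<otimes> b} = generate G {k}" using V k generate_inv_eq by auto
  have gC: "generate G {gcomm G g h} = generate G {k}" using C k generate_inv_eq by auto
  have c3: "gcomm G g h [^] (3::nat) = \<one>" using C k k3 nat_pow_inv by auto
  show ?thesis using gU gV gC c3 unfolding a_def b_def by simp
qed


theorem lemma3p7:
  fixes G :: "('a, 'b) monoid_scheme" and \<phi> :: "'a \<Rightarrow> 'a" and g h :: 'a
  assumes "group G"
    and "CHAR('r::comm_ring_1) = 3"
    and "is_involution G \<phi>"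
    and "\<forall>\<alpha>\<in>(skew_elems G \<phi> :: ('a \<Rightarrow> 'r) set). \<forall>\<beta>\<in>skew_elems G \<phi>.
           gr_mult G \<alpha> \<beta> = gr_mult G \<beta> \<alpha>"
    and "g \<in> carrier G" "h \<in> carrier G" "\<phi> g \<noteq> g" "\<phi> h \<noteq> h"
    and "g \<otimes>\<^bsub>G\<^esub> h \<noteq> h \<otimes>\<^bsub>G\<^esub> g"
    and "(\<phi> (g \<otimes>\<^bsub>G\<^esub> h) = g \<otimes>\<^bsub>G\<^esub> h \<and>
            h \<otimes>\<^bsub>G\<^esub> g = \<phi> g \<otimes>\<^bsub>G\<^esub> h \<and> \<phi> g \<otimes>\<^bsub>G\<^esub> h = g \<otimes>\<^bsub>G\<^esub> \<phi> h)
       \<or> (g \<otimes>\<^bsub>G\<^esub> h = h \<otimes>\<^bsub>G\<^esub> \<phi> g \<and> h \<otimes>\<^bsub>G\<^esub> \<phi> g = \<phi> g \<otimes>\<^bsub>G\<^esub> \<phi> h \<and>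
            \<phi> h \<otimes>\<^bsub>G\<^esub> g = \<phi> g \<otimes>\<^bsub>G\<^esub> h)
       \<or> (g \<otimes>\<^bsub>G\<^esub> h = \<phi> h \<otimes>\<^bsub>G\<^esub> g \<and> \<phi> h \<otimes>\<^bsub>G\<^esub> g = \<phi> g \<otimes>\<^bsub>G\<^esub> \<phi> h \<and>
            h \<otimes>\<^bsub>G\<^esub> \<phi> g = g \<otimes>\<^bsub>G\<^esub> \<phi> h)
       \<or> (\<phi> (h \<otimes>\<^bsub>G\<^esub> g) = h \<otimes>\<^bsub>G\<^esub> g \<and>
            g \<otimes>\<^bsub>G\<^esub> h = \<phi> h \<otimes>\<^bsub>G\<^esub> g \<and> \<phi> h \<otimes>\<^bsub>G\<^esub> g = h \<otimes>\<^bsub>G\<^esub> \<phi> g)"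
  shows "generate G {inv\<^bsub>G\<^esub> g \<otimes>\<^bsub>G\<^esub> \<phi> g} = generate G {inv\<^bsub>G\<^esub> h \<otimes>\<^bsub>G\<^esub> \<phi> h} \<and>
         generate G {inv\<^bsub>G\<^esub> h \<otimes>\<^bsub>G\<^esub> \<phi> h} = generate G {gcomm G g h} \<and>
         gcomm G g h [^]\<^bsub>G\<^esub> (3::nat) = \<one>\<^bsub>G\<^esub>"
  by (rule group.main_aux[OF assms(1) assms])

end
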